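(* For every positive integer $k$, any randomized distributed algorithm in the LOCAL model that, for every assignment of unique identifiers, finds a proper $4$-coloring of $G_k$ with success probability greater than $1/2$ requires at least $k$ rounds.
   Context: The planar graphs $G_k$ are defined inductively. $G_0$ has vertex set $\{v_{(0,1)},v_{(0,2)}\}$ and the single edge $\{v_{(0,1)},v_{(0,2)}\}$. For $i\ge 1$, $G_i$ is obtained from $G_{i-1}$ by adding, for each $j\in\{1,2\}$, four new vertices $a_{(i,j)},b_{(i,j)},c_{(i,j)},v_{(i,j)}$ and the edges $\{a_{(i,j)},b_{(i,j)}\},\{b_{(i,j)},c_{(i,j)}\},\{c_{(i,j)},a_{(i,j)}\}$, $\{a_{(i,j)},v_{(i,j)}\},\{b_{(i,j)},v_{(i,j)}\},\{c_{(i,j)},v_{(i,j)}\}$, $\{a_{(i,j)},v_{(i-1,j)}\},\{b_{(i,j)},v_{(i-1,j)}\},\{c_{(i,j)},v_{(i-1,j)}\}$. LOCAL model: the network is the graph, each vertex has a unique identifier, and in synchronous rounds each vertex receives the previous round's messages, computes arbitrarily (possibly using random bits) and sends messages of unbounded size to its neighbors; at the end each vertex outputs its color. A proper $4$-coloring assigns colors in $\{1,2,3,4\}$ with adjacent vertices colored differently. *)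

theory Defs
  imports "HOL-Probability.Probability"
begin

datatype vtx = Vv nat nat | Av nat nat | Bv nat nat | Cv nat nat

fun Gk_vertices :: "nat \<Rightarrow> vtx set" where
  "Gk_vertices 0 = {Vv 0 1, Vv 0 2}"
| "Gk_vertices (Suc i) = Gk_vertices i \<union>
     (\<Union>j\<in>{1,2::nat}. {Av (Suc i) j, Bv (Suc i) j, Cv (Suc i) j, Vv (Suc i) j})"

fun Gk_edges :: "nat \<Rightarrow> vtx set set" where
  "Gk_edges 0 = {{Vv 0 1, Vv 0 2}}"
| "Gk_edges (Suc i) = Gk_edges i \<union>
     (\<Union>j\<in>{1,2::nat}.
        {{Av (Suc i) j, Bv (Suc i) j}, {Bv (Suc i) j, Cv (Suc i) j}, {Cv (Suc i) j, Av (Suc i) j},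
         {Av (Suc i) j, Vv (Suc i) j}, {Bv (Suc i) j, Vv (Suc i) j}, {Cv (Suc i) j, Vv (Suc i) j},
         {Av (Suc i) j, Vv i j}, {Bv (Suc i) j, Vv i j}, {Cv (Suc i) j, Vv i j}})"

definition proper_coloring :: "'v set \<Rightarrow> 'v set set \<Rightarrow> nat \<Rightarrow> ('v \<Rightarrow> nat) \<Rightarrow> bool" where
  "proper_coloring V E q c \<longleftrightarrow>
     (\<forall>v\<in>V. c v \<in> {1..q}) \<and> (\<forall>u\<in>V. \<forall>w\<in>V. {u, w} \<in> E \<longrightarrow> c u \<noteq> c w)"

text \<open>A randomized LOCAL algorithm: every vertex draws an independent random seed from
  la_rand (arbitrary probability space), starts in state la_init (its identifier) seed;
  in round r every vertex sends the message la_send r (state) to all its neighbours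
  (messages of unbounded size), receives the multiset of messages of its neighbours and
  updates its state by la_step.\<close>
record ('r, 's, 'm) local_alg =
  la_rand :: "'r measure"
  la_init :: "nat \<Rightarrow> 'r \<Rightarrow> 's"
  la_send :: "nat \<Rightarrow> 's \<Rightarrow> 'm"
  la_step :: "nat \<Rightarrow> 's \<Rightarrow> 'm multiset \<Rightarrow> 's"
  la_output :: "'s \<Rightarrow> nat"
  la_rounds :: nat

fun local_state ::
  "('r, 's, 'm) local_alg \<Rightarrow> 'v set \<Rightarrow> 'v set set \<Rightarrow> ('v \<Rightarrow> nat) \<Rightarrow> ('v \<Rightarrow> 'r) \<Rightarrow> nat \<Rightarrow> 'v \<Rightarrow> 's"
where
  "local_state A V E idf \<rho> 0 v = la_init A (idf v) (\<rho> v)"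
| "local_state A V E idf \<rho> (Suc r) v =
     la_step A r (local_state A V E idf \<rho> r v)
       (image_mset (\<lambda>u. la_send A r (local_state A V E idf \<rho> r u))
          (mset_set {u \<in> V. {u, v} \<in> E}))"

definition local_output ::
  "('r, 's, 'm) local_alg \<Rightarrow> 'v set \<Rightarrow> 'v set set \<Rightarrow> ('v \<Rightarrow> nat) \<Rightarrow> ('v \<Rightarrow> 'r) \<Rightarrow> 'v \<Rightarrow> nat"
where
  "local_output A V E idf \<rho> v = la_output A (local_state A V E idf \<rho> (la_rounds A) v)"

definition success_prob ::
  "('r, 's, 'm) local_alg \<Rightarrow> 'v set \<Rightarrow> 'v set set \<Rightarrow> nat \<Rightarrow> ('v \<Rightarrow> nat) \<Rightarrow> real"
where
  "success_prob A V E q idf =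
     measure (PiM V (\<lambda>_. la_rand A))
       {\<rho> \<in> space (PiM V (\<lambda>_. la_rand A)). proper_coloring V E q (local_output A V E idf \<rho>)}"

end

theory Submission
  imports Defs
begin


definition flipj :: "nat \<Rightarrow> nat" where "flipj j = (if j = 1 then 2 else if j = 2 then 1 else j)"

fun flip :: "vtx \<Rightarrow> vtx" where
  "flip (Vv i j) = Vv i (flipj j)" | "flip (Av i j) = Av i (flipj j)"
| "flip (Bv i j) = Bv i (flipj j)" | "flip (Cv i j) = Cv i (flipj j)"

fun lev :: "vtx \<Rightarrow> nat" where
  "lev (Vv i j) = i" | "lev (Av i j) = i" | "lev (Bv i j) = i" | "lev (Cv i j) = i"

fun hh :: "vtx \<Rightarrow> nat" where
  "hh (Vv i j) = 2*i" | "hh (Av i j) = 2*i - 1" | "hh (Bv i j) = 2*i - 1" | "hh (Cv i j) = 2*i - 1"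

lemma flip_flip[simp]: "flip (flip u) = u"
  by (cases u) (auto simp: flipj_def)

lemma lev_flip[simp]: "lev (flip u) = lev u" by (cases u) auto
lemma hh_flip[simp]: "hh (flip u) = hh u" by (cases u) auto

lemma inj_flip: "inj flip" by (metis injI flip_flip)

lemma V_char: "u \<in> Gk_vertices k \<longleftrightarrow> lev u \<le> k \<and> (case u of Vv i j \<Rightarrow> j \<in> {1,2} | Av i j \<Rightarrow> 1 \<le> i \<and> j\<in>{1,2}
   | Bv i j \<Rightarrow> 1 \<le> i \<and> j\<in>{1,2} | Cv i j \<Rightarrow> 1 \<le> i \<and> j\<in>{1,2})"
  by (induction k; cases u) (auto simp: le_Suc_eq)

lemma V_flip: "flip u \<in> Gk_vertices k \<longleftrightarrow> u \<in> Gk_vertices k"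
  by (cases u) (auto simp: V_char flipj_def)

lemma V_hh: "u \<in> Gk_vertices k \<Longrightarrow> hh u = 2 * lev u \<or> (hh u + 1 = 2 * lev u \<and> lev u \<ge> 1)"
  by (cases u) (auto simp: V_char)

definition NE :: "nat \<Rightarrow> nat \<Rightarrow> vtx set set" where
 "NE k j = {{Av (Suc k) j, Bv (Suc k) j}, {Bv (Suc k) j, Cv (Suc k) j}, {Cv (Suc k) j, Av (Suc k) j},
         {Av (Suc k) j, Vv (Suc k) j}, {Bv (Suc k) j, Vv (Suc k) j}, {Cv (Suc k) j, Vv (Suc k) j},
         {Av (Suc k) j, Vv k j}, {Bv (Suc k) j, Vv k j}, {Cv (Suc k) j, Vv k j}}"

lemma Gk_edges_Suc': "Gk_edges (Suc k) = Gk_edges k \<union> NE k 1 \<union> NE k 2"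
  unfolding NE_def by (simp only: Gk_edges.simps UN_insert UN_empty Un_empty_right Un_assoc)

lemma NE_flip: "image flip ` NE k j = NE k (flipj j)"
  unfolding NE_def by (simp only: image_insert image_empty flip.simps)

lemma E_flip_all: "image flip ` Gk_edges k \<subseteq> Gk_edges k"
proof (induction k)
  case 0
  have "flip ` {Vv 0 1, Vv 0 2} = {Vv 0 1, Vv 0 2}" by (auto simp: flipj_def)
  then show ?case by simp
next
  case (Suc k)
  have f1: "flipj 1 = 2" "flipj 2 = 1" by (auto simp: flipj_def)
  have "image flip ` Gk_edges (Suc k) = image flip ` Gk_edges k \<union> NE k 2 \<union> NE k 1"
    unfolding Gk_edges_Suc' image_Un NE_flip f1 ..
  also have "... \<subseteq> Gk_edges k \<union> NE k 2 \<union> NE k 1"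
    by (intro Un_mono Suc.IH subset_refl)
  also have "... = Gk_edges (Suc k)" by (simp only: Gk_edges_Suc' Un_ac)
  finally show ?case .
qed

lemma E_flip: "e \<in> Gk_edges k \<Longrightarrow> flip ` e \<in> Gk_edges k"
  by (rule subsetD[OF E_flip_all], rule imageI)

lemma E_hh: "e \<in> Gk_edges k \<Longrightarrow> u \<in> e \<Longrightarrow> w \<in> e \<Longrightarrow> hh w \<le> hh u + 1"
proof (induction k arbitrary: e)
  case 0 then show ?case by (simp only: Gk_edges.simps singleton_iff) (elim insertE; simp)
next
  case (Suc k)
  from Suc.prems(1) have "e \<in> Gk_edges k \<or> e \<in> NE k 1 \<or> e \<in> NE k 2"
    unfolding Gk_edges_Suc' by blast
  then show ?case
  proof (elim disjE)
    assume "e \<in> Gk_edges k" then show ?thesis using Suc by blast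
  next
    assume "e \<in> NE k 1" then show ?thesis using Suc.prems(2,3) unfolding NE_def
      by (elim insertE; simp only: insert_iff empty_iff; elim disjE; simp)
  next
    assume "e \<in> NE k 2" then show ?thesis using Suc.prems(2,3) unfolding NE_def
      by (elim insertE; simp only: insert_iff empty_iff; elim disjE; simp)
  qed
qed

lemma E_mono: "i \<le> k \<Longrightarrow> Gk_edges i \<subseteq> Gk_edges k"
  by (rule lift_Suc_mono_le[of Gk_edges]) (auto simp only: Gk_edges_Suc' Un_assoc intro: Un_upper1)

lemma edge_flip: "{u, w} \<in> Gk_edges k \<longleftrightarrow> {flip u, flip w} \<in> Gk_edges k"
  using E_flip[of "{u,w}" k] E_flip[of "{flip u, flip w}" k]
  by (simp only: image_insert image_empty flip_flip) (rule iffI)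



lemma loc_gen:
  fixes A :: "('r,'s,'m) local_alg" and g :: "'v \<Rightarrow> 'v"
  assumes base: "\<And>u. u \<in> V \<Longrightarrow> Q 0 u \<Longrightarrow> idf' u = idf (g u) \<and> \<rho>' u = \<rho> (g u)"
  and step: "\<And>r u. u \<in> V \<Longrightarrow> Q (Suc r) u \<Longrightarrow> Q r u \<and> (\<forall>w\<in>V. {w,u} \<in> E \<longrightarrow> Q r w)
     \<and> {w\<in>V. {w, g u} \<in> E} = g ` {w\<in>V. {w,u}\<in>E} \<and> inj_on g {w\<in>V. {w,u}\<in>E}"
  shows "u \<in> V \<Longrightarrow> Q r u \<Longrightarrow> local_state A V E idf' \<rho>' r u = local_state A V E idf \<rho> r (g u)"
proof (induction r arbitrary: u)
  case 0 then show ?case using base by simp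
next
  case (Suc r)
  note st = step[OF Suc.prems]
  let ?N = "{w\<in>V. {w,u}\<in>E}"
  have "image_mset (\<lambda>w. la_send A r (local_state A V E idf' \<rho>' r w)) (mset_set ?N)
      = image_mset (\<lambda>w. la_send A r (local_state A V E idf \<rho> r (g w))) (mset_set ?N)"
  proof (rule image_mset_cong)
    fix w assume w: "w \<in># mset_set ?N"
    have "finite ?N" using w by (cases "finite ?N") auto
    then have "w \<in> ?N" using w by simp
    then show "la_send A r (local_state A V E idf' \<rho>' r w) = la_send A r (local_state A V E idf \<rho> r (g w))"
      using Suc.IH st by auto
  qed
  also have "\<dots> = image_mset (\<lambda>x. la_send A r (local_state A V E idf \<rho> r x)) (image_mset g (mset_set ?N))"
    by (simp add: multiset.map_comp comp_def)
  also have "image_mset g (mset_set ?N) = mset_set (g ` ?N)"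
    using st by (intro image_mset_mset_set) auto
  also have "g ` ?N = {w\<in>V. {w, g u} \<in> E}" using st by auto
  finally show ?case using Suc.IH[OF Suc.prems(1)] st by simp
qed


definition sig :: "nat \<Rightarrow> vtx \<Rightarrow> vtx" where
  "sig L u = (if L \<le> lev u then flip u else u)"

lemma inj_sig: "inj (sig L)"
proof (rule injI)
  fix x y assume "sig L x = sig L y"
  then show "x = y" unfolding sig_def
    by (metis flip_flip lev_flip)
qed

lemma V_sig: "u \<in> Gk_vertices k \<Longrightarrow> sig L u \<in> Gk_vertices k"
  unfolding sig_def using V_flip by auto

lemma hh_lev1: "u \<in> Gk_vertices k \<Longrightarrow> 1 \<le> L \<Longrightarrow> 2*L - 1 \<le> hh u \<Longrightarrow> L \<le> lev u"
  using V_hh[of u k] by arith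

lemma hh_lev2: "u \<in> Gk_vertices k \<Longrightarrow> 1 \<le> L \<Longrightarrow> hh u \<le> 2*L - 2 \<Longrightarrow> lev u < L"
  using V_hh[of u k] by arith

lemma nbr_hh: "{w, u} \<in> Gk_edges k \<Longrightarrow> hh u \<le> hh w + 1"
  using E_hh[of "{w,u}" k w u] by simp

lemma top_loc:
  fixes A :: "('r,'s,'m) local_alg"
  assumes L: "1 \<le> L"
    and ass: "\<And>u. u \<in> Gk_vertices k \<Longrightarrow> idf' u = idf (sig L u) \<and> \<rho>' u = \<rho> (sig L u)"
  shows "u \<in> Gk_vertices k \<Longrightarrow> 2*L - 1 + r \<le> hh u \<Longrightarrow>
    local_state A (Gk_vertices k) (Gk_edges k) idf' \<rho>' r u
      = local_state A (Gk_vertices k) (Gk_edges k) idf \<rho> r (sig L u)"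
proof (rule loc_gen[where Q = "\<lambda>r u. 2*L - 1 + r \<le> hh u"])
  fix u assume "u \<in> Gk_vertices k" then show "idf' u = idf (sig L u) \<and> \<rho>' u = \<rho> (sig L u)" using ass by blast
next
  fix r u assume u: "u \<in> Gk_vertices k" and h: "2*L - 1 + Suc r \<le> hh u"
  let ?V = "Gk_vertices k" and ?E = "Gk_edges k"
  have nb: "\<forall>w\<in>?V. {w,u} \<in> ?E \<longrightarrow> 2*L - 1 + r \<le> hh w"
    using h nbr_hh[of _ u k] by fastforce
  have su: "sig L u = flip u" using hh_lev1[OF u L] h unfolding sig_def by simp
  have sw: "\<And>w. w \<in> {w\<in>?V. {w,u}\<in>?E} \<Longrightarrow> sig L w = flip w"
    using nb hh_lev1[OF _ L] unfolding sig_def by force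
  have "{w\<in>?V. {w, flip u} \<in> ?E} = flip ` {w\<in>?V. {w,u}\<in>?E}"
  proof
    show "{w\<in>?V. {w, flip u} \<in> ?E} \<subseteq> flip ` {w\<in>?V. {w,u}\<in>?E}"
    proof
      fix w assume "w \<in> {w\<in>?V. {w, flip u} \<in> ?E}"
      then have "flip w \<in> {w\<in>?V. {w,u}\<in>?E}"
        using V_flip edge_flip[of w "flip u" k] by simp
      then show "w \<in> flip ` {w\<in>?V. {w,u}\<in>?E}" by (metis flip_flip imageI)
    qed
  next
    show "flip ` {w\<in>?V. {w,u}\<in>?E} \<subseteq> {w\<in>?V. {w, flip u} \<in> ?E}"
      using V_flip edge_flip by auto
  qed
  also have "\<dots> = sig L ` {w\<in>?V. {w,u}\<in>?E}" using sw by (intro image_cong) auto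
  finally have "{w\<in>?V. {w, sig L u} \<in> ?E} = sig L ` {w\<in>?V. {w,u}\<in>?E}" using su by simp
  then show "2*L - 1 + r \<le> hh u \<and> (\<forall>w\<in>?V. {w,u} \<in> ?E \<longrightarrow> 2*L - 1 + r \<le> hh w)
     \<and> {w\<in>?V. {w, sig L u} \<in> ?E} = sig L ` {w\<in>?V. {w,u}\<in>?E} \<and> inj_on (sig L) {w\<in>?V. {w,u}\<in>?E}"
    using h nb inj_sig[of L] by (auto intro: inj_on_subset)
qed

lemma bot_loc:
  fixes A :: "('r,'s,'m) local_alg"
  assumes L: "1 \<le> L"
    and ass: "\<And>u. u \<in> Gk_vertices k \<Longrightarrow> idf' u = idf (sig L u) \<and> \<rho>' u = \<rho> (sig L u)"
  shows "u \<in> Gk_vertices k \<Longrightarrow> hh u + r \<le> 2*L - 2 \<Longrightarrow>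
    local_state A (Gk_vertices k) (Gk_edges k) idf' \<rho>' r u
      = local_state A (Gk_vertices k) (Gk_edges k) idf \<rho> r (id u)"
proof (rule loc_gen[where Q = "\<lambda>r u. hh u + r \<le> 2*L - 2"])
  fix u assume u: "u \<in> Gk_vertices k" and "hh u + 0 \<le> 2*L - 2"
  then have "sig L u = u" using hh_lev2[OF u L] unfolding sig_def by simp
  then show "idf' u = idf (id u) \<and> \<rho>' u = \<rho> (id u)" using ass[OF u] by simp
next
  fix r u assume u: "u \<in> Gk_vertices k" and h: "hh u + Suc r \<le> 2*L - 2"
  let ?V = "Gk_vertices k" and ?E = "Gk_edges k"
  have nb: "\<forall>w\<in>?V. {w,u} \<in> ?E \<longrightarrow> hh w + r \<le> 2*L - 2"
  proof (intro ballI impI)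
    fix w assume "{w,u} \<in> ?E"
    then have "hh w \<le> hh u + 1" using E_hh[of "{w,u}" k u w] by simp
    then show "hh w + r \<le> 2*L - 2" using h by simp
  qed
  show "hh u + r \<le> 2*L - 2 \<and> (\<forall>w\<in>?V. {w,u} \<in> ?E \<longrightarrow> hh w + r \<le> 2*L - 2)
     \<and> {w\<in>?V. {w, id u} \<in> ?E} = id ` {w\<in>?V. {w,u}\<in>?E} \<and> inj_on id {w\<in>?V. {w,u}\<in>?E}"
    using h nb by simp
qed

lemma fourth_color:
  fixes x y z p q :: nat
  assumes "x \<in> {1..4}" "y \<in> {1..4}" "z \<in> {1..4}" "p \<in> {1..4}" "q \<in> {1..4}"
    "x \<noteq> y" "y \<noteq> z" "z \<noteq> x" "p \<noteq> x" "p \<noteq> y" "p \<noteq> z" "q \<noteq> x" "q \<noteq> y" "q \<noteq> z"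
  shows "p = q"
proof -
  have sub: "{x,y,z,p} \<subseteq> {1..4}" using assms by auto
  have c4: "card {x,y,z,p} = 4" using assms by auto
  have "card {1..4::nat} = 4" by simp
  then have "{x,y,z,p} = {1..4}" using card_subset_eq[OF _ sub] c4 by simp
  then have "q \<in> {x,y,z,p}" using assms(5) by simp
  then show ?thesis using assms by auto
qed

lemma V_mem: "j \<in> {1,2} \<Longrightarrow> i \<le> k \<Longrightarrow> Vv i j \<in> Gk_vertices k"
  by (simp add: V_char)

lemma color_chain:
  assumes pc: "proper_coloring (Gk_vertices k) (Gk_edges k) 4 c" and j: "j \<in> {1,2}"
  shows "i \<le> k \<Longrightarrow> c (Vv i j) = c (Vv 0 j)"
proof (induction i)
  case 0 then show ?case by simp
next
  case (Suc i)
  let ?V = "Gk_vertices k" and ?E = "Gk_edges k"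
  have jj: "j = 1 \<or> j = 2" using j by simp
  have sub0: "NE i j \<subseteq> Gk_edges (Suc i)"
    using jj by (elim disjE; simp only: Gk_edges_Suc'; blast)
  have sub: "NE i j \<subseteq> ?E" using sub0 E_mono[OF Suc.prems] by (rule subset_trans)
  have mem: "Av (Suc i) j \<in> ?V" "Bv (Suc i) j \<in> ?V" "Cv (Suc i) j \<in> ?V" "Vv (Suc i) j \<in> ?V" "Vv i j \<in> ?V"
    using Suc.prems j by (auto simp: V_char)
  have col: "\<And>v. v \<in> ?V \<Longrightarrow> c v \<in> {1..4}" using pc unfolding proper_coloring_def by blast
  have ne: "\<And>u w. u \<in> ?V \<Longrightarrow> w \<in> ?V \<Longrightarrow> {u, w} \<in> ?E \<Longrightarrow> c u \<noteq> c w"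
    using pc unfolding proper_coloring_def by blast
  have e: "{Av (Suc i) j, Bv (Suc i) j} \<in> ?E" "{Bv (Suc i) j, Cv (Suc i) j} \<in> ?E" "{Cv (Suc i) j, Av (Suc i) j} \<in> ?E"
         "{Av (Suc i) j, Vv (Suc i) j} \<in> ?E" "{Bv (Suc i) j, Vv (Suc i) j} \<in> ?E" "{Cv (Suc i) j, Vv (Suc i) j} \<in> ?E"
         "{Av (Suc i) j, Vv i j} \<in> ?E" "{Bv (Suc i) j, Vv i j} \<in> ?E" "{Cv (Suc i) j, Vv i j} \<in> ?E"
    using sub unfolding NE_def by (simp_all only: insert_subset)
  have "c (Vv (Suc i) j) = c (Vv i j)"
    by (rule fourth_color[OF col[OF mem(1)] col[OF mem(2)] col[OF mem(3)] col[OF mem(4)] col[OF mem(5)]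
      ne[OF mem(1) mem(2) e(1)] ne[OF mem(2) mem(3) e(2)] ne[OF mem(3) mem(1) e(3)]
      ne[OF mem(1) mem(4) e(4), THEN not_sym] ne[OF mem(2) mem(4) e(5), THEN not_sym] ne[OF mem(3) mem(4) e(6), THEN not_sym]
      ne[OF mem(1) mem(5) e(7), THEN not_sym] ne[OF mem(2) mem(5) e(8), THEN not_sym] ne[OF mem(3) mem(5) e(9), THEN not_sym]])
  then show ?case using Suc by simp
qed

lemma color_facts:
  assumes pc: "proper_coloring (Gk_vertices k) (Gk_edges k) 4 c"
  shows "c (Vv k 1) = c (Vv 0 1)" "c (Vv k 2) = c (Vv 0 2)" "c (Vv 0 1) \<noteq> c (Vv 0 2)"
proof -
  show "c (Vv k 1) = c (Vv 0 1)" "c (Vv k 2) = c (Vv 0 2)" using color_chain[OF pc, of 1 k] color_chain[OF pc, of 2 k] by simp_all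
  have "{Vv 0 1, Vv 0 2} \<in> Gk_edges 0" by simp
  then have "{Vv 0 1, Vv 0 2} \<in> Gk_edges k" using E_mono[of 0 k] by blast
  moreover have "Vv 0 1 \<in> Gk_vertices k" "Vv 0 2 \<in> Gk_vertices k" by (auto simp: V_char)
  ultimately show "c (Vv 0 1) \<noteq> c (Vv 0 2)" using pc unfolding proper_coloring_def by blast
qed

lemma finite_V: "finite (Gk_vertices k)"
  by (induction k) auto

theorem lemma6p6:
  fixes k :: nat and A :: "('r, 's, 'm) local_alg"
  assumes "1 \<le> k"
    and "prob_space (la_rand A)"
    and "\<forall>idf. inj_on idf (Gk_vertices k) \<longrightarrow>
           success_prob A (Gk_vertices k) (Gk_edges k) 4 idf > 1/2"
  shows "k \<le> la_rounds A"
proof (rule ccontr)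
  assume "\<not> k \<le> la_rounds A"
  define t where "t = la_rounds A"
  have tk: "t < k" using \<open>\<not> k \<le> la_rounds A\<close> t_def by simp
  define L where "L = (t + 3) div 2"
  have L1: "1 \<le> L" unfolding L_def by simp
  have Lt1: "t + 2 \<le> 2*L" "2*L \<le> t + 3" unfolding L_def by auto
  have Lk: "L \<le> k" using Lt1 tk assms(1) by linarith
  let ?V = "Gk_vertices k" and ?E = "Gk_edges k"
  define M where "M = PiM ?V (\<lambda>_. la_rand A)"
  interpret P: prob_space M unfolding M_def using assms(2) by (intro prob_space_PiM) auto
  obtain idf :: "vtx \<Rightarrow> nat" where idf: "inj_on idf ?V"
    using finite_imp_inj_to_nat_seg[OF finite_V[of k]] by blast
  define idf' where "idf' = idf \<circ> sig L"
  have idf': "inj_on idf' ?V" unfolding idf'_def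
    by (rule comp_inj_on) (auto intro: inj_on_subset[OF inj_sig] inj_on_subset[OF idf] V_sig)
  define S1 where "S1 = {\<rho> \<in> space M. proper_coloring ?V ?E 4 (local_output A ?V ?E idf \<rho>)}"
  define S2 where "S2 = {\<rho> \<in> space M. proper_coloring ?V ?E 4 (local_output A ?V ?E idf' \<rho>)}"
  have m1: "measure M S1 > 1/2" using assms(3) idf unfolding S1_def M_def success_prob_def by blast
  have m2: "measure M S2 > 1/2" using assms(3) idf' unfolding S2_def M_def success_prob_def by blast
  have S1s: "S1 \<in> sets M" using m1 measure_notin_sets[of S1 M] by force
  have S2s: "S2 \<in> sets M" using m2 measure_notin_sets[of S2 M] by force
  define T where "T = (\<lambda>\<rho>::vtx \<Rightarrow> 'r. \<lambda>n\<in>?V. \<rho> (sig L n))"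
  have Tm: "T \<in> measurable M M" unfolding T_def M_def
    by (intro measurable_restrict measurable_component_singleton V_sig)
  have dT: "distr M M T = M" unfolding M_def T_def
    using distr_PiM_reindex[of ?V "\<lambda>_. la_rand A" "sig L" ?V] assms(2)
      inj_on_subset[OF inj_sig] V_sig by auto
  define S2' where "S2' = T -` S2 \<inter> space M"
  have S2's: "S2' \<in> sets M" unfolding S2'_def using Tm S2s by (rule measurable_sets)
  have mS2': "measure M S2' = measure M S2"
    using measure_distr[OF Tm S2s] dT unfolding S2'_def by simp
  have disj: "S1 \<inter> S2' = {}"
  proof (rule ccontr)
    assume "S1 \<inter> S2' \<noteq> {}"
    then obtain \<rho> where r1: "\<rho> \<in> S1" and r2: "\<rho> \<in> S2'" by blast
    let ?c = "local_output A ?V ?E idf \<rho>" and ?c' = "local_output A ?V ?E idf' (T \<rho>)"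
    have p1: "proper_coloring ?V ?E 4 ?c" using r1 unfolding S1_def by blast
    have p2: "proper_coloring ?V ?E 4 ?c'" using r2 unfolding S2'_def S2_def by blast
    have ass: "\<And>u. u \<in> ?V \<Longrightarrow> idf' u = idf (sig L u) \<and> T \<rho> u = \<rho> (sig L u)"
      unfolding idf'_def T_def by simp
    have vk: "Vv k 1 \<in> ?V" "Vv 0 1 \<in> ?V" by (auto simp: V_char)
    have "local_state A ?V ?E idf' (T \<rho>) t (Vv k 1) = local_state A ?V ?E idf \<rho> t (sig L (Vv k 1))"
      using top_loc[where L=L and k=k and idf'=idf' and idf=idf and \<rho>'="T \<rho>" and \<rho>=\<rho> and A=A and u="Vv k 1" and r=t, OF L1 ass] vk Lt1 tk by simp
    also have "sig L (Vv k 1) = Vv k 2" using Lk by (simp add: sig_def flipj_def)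
    finally have top: "?c' (Vv k 1) = ?c (Vv k 2)" unfolding local_output_def t_def by simp
    have "local_state A ?V ?E idf' (T \<rho>) t (Vv 0 1) = local_state A ?V ?E idf \<rho> t (id (Vv 0 1))"
      using bot_loc[where L=L and k=k and idf'=idf' and idf=idf and \<rho>'="T \<rho>" and \<rho>=\<rho> and A=A and u="Vv 0 1" and r=t, OF L1 ass] vk Lt1 by simp
    then have bot: "?c' (Vv 0 1) = ?c (Vv 0 1)" unfolding local_output_def t_def by simp
    show False using color_facts[OF p1] color_facts[OF p2] top bot by simp
  qed
  have "measure M (S1 \<union> S2') = measure M S1 + measure M S2'"
    using P.finite_measure_Union[OF S1s S2's disj] .
  moreover have "measure M (S1 \<union> S2') \<le> 1" by (rule P.prob_le_1)
  ultimately show False using m1 m2 mS2' by simp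
qed

end
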